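(* For $x>0$, $$\big[\ln\partial_x + \ln(2\sqrt{x})\big]\, I_0(\sqrt{x}) = K_0(\sqrt{x}),$$ where $I_0$ is the modified Bessel function of the first kind of order $0$, $K_0$ is the Macdonald function (modified Bessel function of the second kind) of order $0$, $\ln(2\sqrt x)$ acts by multiplication, and $\ln\partial_x$ is applied to $I_0(\sqrt{x})=\sum_{k\ge0}\frac{x^k}{4^k (k!)^2}$ term by term as described in the context.
   Context: For real $\nu$, $x>0$ and $\mu\ge 0$, the fractional derivative of a power is defined by $\partial_x^\nu x^\mu = \frac{\Gamma(\mu+1)}{\Gamma(\mu-\nu+1)}\,x^{\mu-\nu}$. The logarithm of the derivative operator is defined on powers by $(\ln\partial_x)\,x^\mu := \lim_{\nu\to 0}\frac{\partial_x^\nu x^\mu - x^\mu}{\nu}$, and on a power series $\sum_n c_n x^n$ it is defined termwise: $(\ln\partial_x)\sum_n c_nx^n := \sum_n c_n (\ln\partial_x)x^n$. *)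

theory Defs
  imports "HOL-Analysis.Analysis"
begin

definition frac_deriv_pow :: "real \<Rightarrow> real \<Rightarrow> real \<Rightarrow> real" where
  "frac_deriv_pow \<nu> \<mu> x = Gamma (\<mu> + 1) / Gamma (\<mu> - \<nu> + 1) * x powr (\<mu> - \<nu>)"

definition log_deriv_pow :: "real \<Rightarrow> real \<Rightarrow> real" where
  "log_deriv_pow \<mu> x = Lim (at 0) (\<lambda>\<nu>. (frac_deriv_pow \<nu> \<mu> x - x powr \<mu>) / \<nu>)"

definition log_deriv_series :: "(nat \<Rightarrow> real) \<Rightarrow> real \<Rightarrow> real" where
  "log_deriv_series c x = (\<Sum>n. c n * log_deriv_pow (real n) x)"

definition besselI :: "real \<Rightarrow> real \<Rightarrow> real" where
  "besselI \<nu> z = (\<Sum>k. (z / 2) powr (2 * real k + \<nu>) * rGamma (real k + \<nu> + 1) / fact k)"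

definition besselK0 :: "real \<Rightarrow> real" where
  "besselK0 z = Lim (at 0) (\<lambda>\<nu>. (pi / 2) * (besselI (- \<nu>) z - besselI \<nu> z) / sin (\<nu> * pi))"

end

theory Submission
  imports Defs
begin

lemma frac_deriv_pow_alt:
  "frac_deriv_pow \<nu> (real n) x = fact n * rGamma (real n - \<nu> + 1) * x powr (real n - \<nu>)"
proof -
  have "Gamma (real n + 1) = fact n" using Gamma_fact[of n, where 'a=real] by (simp add: add.commute)
  then show ?thesis unfolding frac_deriv_pow_def by (simp add: Gamma_def divide_inverse)
qed

lemma log_deriv_pow_eq:
  assumes x: "x > 0"
  shows "log_deriv_pow (real n) x = x ^ n * (Digamma (real n + 1) - ln x)"
proof -
  define \<phi> where "\<phi> \<nu> = fact n * rGamma (real n - \<nu> + 1) * x powr (real n - \<nu>)" for \<nu>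
  have nz: "real n - 0 + 1 \<notin> \<int>\<^sub>\<le>\<^sub>0" 
  proof -
    have "real n - 0 + 1 = of_nat (Suc n)" by simp
    then show ?thesis by (simp only: of_nat_in_nonpos_Ints_iff)
  qed
  have d: "(\<phi> has_real_derivative x ^ n * (Digamma (real n + 1) - ln x)) (at 0)"
  proof -
    have "(\<phi> has_real_derivative fact n * (- rGamma (real n - 0 + 1) * Digamma (real n - 0 + 1) * (0 - 1 + 0)) * x powr (real n - 0)
       + fact n * rGamma (real n - 0 + 1) * (x powr (real n - 0) * ((0 - 1) * ln x / 1 + 0 * (real n - 0) / x))) (at 0)"
      unfolding \<phi>_def using x nz
      by (intro derivative_eq_intros refl) auto
    moreover have "rGamma (real n + 1) = 1 / fact n"
      using Gamma_fact[of n, where 'a=real] by (simp add: rGamma_inverse_Gamma add.commute divide_inverse)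
    ultimately show ?thesis using x by (simp add: powr_realpow algebra_simps)
  qed
  have "\<phi> 0 = x powr real n"
    using Gamma_fact[of n, where 'a=real] by (simp add: \<phi>_def rGamma_inverse_Gamma add.commute)
  with d have "((\<lambda>h. (\<phi> h - x powr real n) / h) \<longlongrightarrow> x ^ n * (Digamma (real n + 1) - ln x)) (at 0)"
    unfolding DERIV_def by simp
  then show ?thesis unfolding log_deriv_pow_def frac_deriv_pow_alt \<phi>_def[symmetric]
    by (intro tendsto_Lim) auto
qed


lemma cont_bound:
  fixes f :: "real \<Rightarrow> real"
  assumes "continuous_on {a..b} f"
  obtains C where "C \<ge> 0" "\<And>x. x \<in> {a..b} \<Longrightarrow> \<bar>f x\<bar> \<le> C"
proof -
  have "compact (f ` {a..b})" by (rule compact_continuous_image[OF assms compact_Icc])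
  then have "bounded (f ` {a..b})" by (rule compact_imp_bounded)
  then obtain C where C: "\<forall>y\<in>f ` {a..b}. norm y \<le> C" by (auto simp: bounded_iff)
  show ?thesis
  proof (rule that[of "max C 0"])
    fix x assume "x \<in> {a..b}"
    then have "norm (f x) \<le> C" using C by blast
    then show "\<bar>f x\<bar> \<le> max C 0" by simp
  qed simp
qed

lemma pos_not_nonpos_Int: "(t::real) > 0 \<Longrightarrow> t \<notin> \<int>\<^sub>\<le>\<^sub>0"
  using nonpos_Ints_nonpos by fastforce

lemma pochhammer_lower:
  assumes "\<nu> \<ge> -1/2"
  shows "pochhammer (\<nu> + 1 :: real) k \<ge> (1/2)^k"
proof -
  have "(1/2::real)^k = (\<Prod>i\<in>{0..<k}. 1/2)" by simp
  also have "\<dots> \<le> (\<Prod>i\<in>{0..<k}. \<nu> + 1 + of_nat i)"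
    by (rule prod_mono) (use assms in auto)
  finally show ?thesis by (simp add: pochhammer_prod)
qed

lemma rGamma_shift:
  "rGamma (real k + \<nu> + 1) = rGamma (\<nu> + 1) / pochhammer (\<nu> + 1) k"
  if "\<nu> \<ge> -1/2"
proof -
  have "(1/2::real)^k > 0" by simp
  then have p: "pochhammer (\<nu> + 1) k > 0" using pochhammer_lower[OF that, of k] by linarith
  have "rGamma (\<nu> + 1) = pochhammer (\<nu> + 1) k * rGamma (\<nu> + 1 + of_nat k)"
    by (rule pochhammer_rGamma)
  with p show ?thesis by (simp add: field_simps add_ac)
qed

lemma rGamma_shift_bound:
  assumes "\<nu> \<ge> -1/2"
  shows "\<bar>rGamma (real k + \<nu> + 1)\<bar> \<le> \<bar>rGamma (\<nu> + 1)\<bar> * 2^k"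
proof -
  have p: "pochhammer (\<nu> + 1) k \<ge> (1/2)^k" by (rule pochhammer_lower[OF assms])
  have pp: "(1/2::real)^k > 0" by simp
  have ab: "\<bar>pochhammer (\<nu> + 1) k\<bar> = pochhammer (\<nu> + 1) k" using p pp by (intro abs_of_nonneg) linarith
  have "\<bar>rGamma (real k + \<nu> + 1)\<bar> = \<bar>rGamma (\<nu> + 1)\<bar> / pochhammer (\<nu> + 1) k"
    using rGamma_shift[OF assms, of k] ab by (simp add: abs_div)
  also have "\<dots> \<le> \<bar>rGamma (\<nu> + 1)\<bar> / (1/2)^k"
    using p pp by (intro divide_left_mono) (auto intro!: mult_pos_pos order.strict_trans2[OF pp p])
  also have "\<dots> = \<bar>rGamma (\<nu> + 1)\<bar> * 2^k" by (simp add: power_one_over)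
  finally show ?thesis .
qed

lemma Digamma_shift:
  assumes "\<nu> > -1"
  shows "Digamma (real k + \<nu> + 1) = Digamma (\<nu> + 1) + (\<Sum>i<k. 1 / (\<nu> + 1 + real i))"
proof (induction k)
  case 0 then show ?case by simp
next
  case (Suc k)
  have "real (Suc k) + \<nu> + 1 = (real k + \<nu> + 1) + 1" by simp
  also have "Digamma \<dots> = Digamma (real k + \<nu> + 1) + 1 / (real k + \<nu> + 1)"
    by (rule Digamma_plus1) (use assms in linarith)
  finally show ?case using Suc by (simp add: add_ac)
qed

lemma Digamma_shift_bound:
  assumes "\<nu> \<ge> -1/2"
  shows "\<bar>Digamma (real k + \<nu> + 1)\<bar> \<le> \<bar>Digamma (\<nu> + 1)\<bar> + 2 * real k"
proof -
  have "\<bar>\<Sum>i<k. 1 / (\<nu> + 1 + real i)\<bar> \<le> (\<Sum>i<k. \<bar>1 / (\<nu> + 1 + real i)\<bar>)"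
    by (rule sum_abs)
  also have "\<dots> \<le> (\<Sum>i<k. 2)"
  proof (rule sum_mono)
    fix i assume "i \<in> {..<k}"
    have "\<nu> + 1 + real i \<ge> 1/2" using assms by simp
    then show "\<bar>1 / (\<nu> + 1 + real i)\<bar> \<le> 2" by (simp add: divide_simps)
  qed
  finally have "\<bar>\<Sum>i<k. 1 / (\<nu> + 1 + real i)\<bar> \<le> 2 * real k" by simp
  then show ?thesis using Digamma_shift[of \<nu> k] assms by simp
qed


lemma rGamma_nat1: "rGamma (real k + 1) = 1 / fact k"
  using Gamma_fact[of k, where 'a=real] by (simp add: rGamma_inverse_Gamma add.commute divide_inverse)

lemma bessel_series:
  fixes z :: real
  assumes z: "z > 0"
  shows "summable (\<lambda>k. (z/2)^(2*k)/(fact k)^2)"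
    and "besselI 0 z = (\<Sum>k. (z/2)^(2*k)/(fact k)^2)"
    and "summable (\<lambda>k. (ln (z/2) - Digamma(real k + 1)) * ((z/2)^(2*k)/(fact k)^2))"
    and "((\<lambda>\<nu>. besselI \<nu> z) has_real_derivative
          (\<Sum>k. (ln (z/2) - Digamma(real k + 1)) * ((z/2)^(2*k)/(fact k)^2))) (at 0)"
proof -
  define a where "a = z/2"
  have a: "a > 0" using z by (simp add: a_def)
  define u where "u k \<nu> = (z/2) powr (2*real k + \<nu>) * rGamma (real k + \<nu> + 1) / fact k" for k \<nu>
  define u' where "u' k \<nu> = (ln a - Digamma (real k + \<nu> + 1)) * u k \<nu>" for k \<nu>
  define S where "S = {-1/2..1/2::real}"
  have bI: "besselI \<nu> z = (\<Sum>k. u k \<nu>)" for \<nu> by (simp add: besselI_def u_def)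
  have u0: "u k 0 = a^(2*k)/(fact k)^2" for k
  proof -
    have "a powr (2 * real k) = a^(2*k)" using a powr_realpow[OF a, of "2*k"] by simp
    then show ?thesis using rGamma_nat1[of k] by (simp add: u_def a_def[symmetric] power2_eq_square)
  qed
  have der: "(u k has_real_derivative u' k \<nu>) (at \<nu> within S)" if "\<nu> \<in> S" for k \<nu>
  proof -
    have nz: "real k + \<nu> + 1 \<notin> \<int>\<^sub>\<le>\<^sub>0" using that by (intro pos_not_nonpos_Int) (auto simp: S_def)
    have ue: "u k = (\<lambda>\<nu>. exp (ln a * (2*real k + \<nu>)) * rGamma (real k + \<nu> + 1) / fact k)"
      using a by (auto simp: u_def a_def[symmetric] powr_def)
    have "(u k has_real_derivative (exp (ln a * (2*real k + \<nu>)) * (ln a * (0 + 1)) * rGamma (real k + \<nu> + 1)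
       + exp (ln a * (2*real k + \<nu>)) * (- rGamma (real k + \<nu> + 1) * Digamma (real k + \<nu> + 1) * (0 + 1 + 0))) / fact k) (at \<nu> within S)"
      unfolding ue using nz by (intro derivative_eq_intros refl) auto
    then show ?thesis using a by (simp add: u'_def u_def a_def[symmetric] powr_def algebra_simps add_divide_distrib diff_divide_distrib)
  qed
  have "continuous_on {-1/2..1/2} (\<lambda>\<nu>::real. a powr \<nu>)"
    using a by (intro continuous_intros) auto
  then obtain Ca where Ca: "Ca \<ge> 0" "\<And>\<nu>. \<nu> \<in> S \<Longrightarrow> \<bar>a powr \<nu>\<bar> \<le> Ca"
    using cont_bound[of "-1/2" "1/2" "\<lambda>\<nu>. a powr \<nu>"] unfolding S_def by blast
  have "continuous_on {-1/2..1/2} (\<lambda>\<nu>::real. rGamma (\<nu> + 1))"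
    by (intro continuous_at_imp_continuous_on ballI isCont_rGamma continuous_intros)
  then obtain Cr where Cr: "Cr \<ge> 0" "\<And>\<nu>. \<nu> \<in> S \<Longrightarrow> \<bar>rGamma (\<nu> + 1)\<bar> \<le> Cr"
    using cont_bound[of "-1/2" "1/2" "\<lambda>\<nu>. rGamma (\<nu> + 1)"] unfolding S_def by blast
  have "continuous_on S (\<lambda>\<nu>. Digamma (\<nu> + 1))"
    unfolding S_def
    by (intro continuous_at_imp_continuous_on ballI isCont_Polygamma continuous_intros pos_not_nonpos_Int)
       auto
  then obtain Cd where Cd: "Cd \<ge> 0" "\<And>\<nu>. \<nu> \<in> S \<Longrightarrow> \<bar>Digamma (\<nu> + 1)\<bar> \<le> Cd"
    using cont_bound[of "-1/2" "1/2" "\<lambda>\<nu>. Digamma (\<nu> + 1)"] unfolding S_def by blast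
  define K where "K = (\<bar>ln a\<bar> + Cd + 2) * Ca * Cr"
  define M where "M k = K * (4 * a^2)^k / fact k" for k
  have K: "K \<ge> 0" using Ca Cr Cd by (simp add: K_def)
  have ubound: "\<bar>u k \<nu>\<bar> \<le> Ca * Cr * (2 * a^2)^k / fact k" if "\<nu> \<in> S" for k \<nu>
  proof -
    have nu: "\<nu> \<ge> -1/2" using that by (simp add: S_def)
    have "a powr (2*real k + \<nu>) = a^(2*k) * a powr \<nu>"
      using a by (simp add: powr_add powr_realpow[OF a, of "2*k", symmetric])
    then have "\<bar>u k \<nu>\<bar> = a^(2*k) * \<bar>a powr \<nu>\<bar> * \<bar>rGamma (real k + \<nu> + 1)\<bar> / fact k"
      by (simp add: u_def a_def[symmetric] abs_mult abs_div)
    also have "\<dots> \<le> a^(2*k) * Ca * (Cr * 2^k) / fact k"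
      using Ca(2)[OF that] Cr(2)[OF that] rGamma_shift_bound[OF nu, of k] Ca Cr a
      by (intro divide_right_mono mult_mono) (auto intro: order.trans)
    also have "\<dots> = Ca * Cr * (2 * a^2)^k / fact k"
      by (simp add: power_mult power_mult_distrib)
    finally show ?thesis .
  qed
  have u'bound: "\<bar>u' k \<nu>\<bar> \<le> M k" if "\<nu> \<in> S" for k \<nu>
  proof -
    have nu: "\<nu> \<ge> -1/2" using that by (simp add: S_def)
    have "\<bar>ln a - Digamma (real k + \<nu> + 1)\<bar> \<le> \<bar>ln a\<bar> + Cd + 2 * real k"
      using Digamma_shift_bound[OF nu, of k] Cd(2)[OF that] by linarith
    also have "\<dots> \<le> (\<bar>ln a\<bar> + Cd + 2) * 2^k"
    proof -
      have "real k < real (2^k)" using less_exp[of k] of_nat_less_iff by blast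
      then have "real k \<le> 2^k" by simp
      moreover have "(1::real) \<le> 2^k" by simp
      moreover have "(\<bar>ln a\<bar> + Cd) \<le> (\<bar>ln a\<bar> + Cd) * 2^k"
        using mult_left_mono[of 1 "2^k" "\<bar>ln a\<bar> + Cd"] Cd(1) by simp
      moreover have "(\<bar>ln a\<bar> + Cd + 2) * 2^k = (\<bar>ln a\<bar> + Cd) * 2^k + 2 * 2^k"
        by (simp add: distrib_right)
      ultimately show ?thesis by linarith
    qed
    finally have d: "\<bar>ln a - Digamma (real k + \<nu> + 1)\<bar> \<le> (\<bar>ln a\<bar> + Cd + 2) * 2^k" .
    have "\<bar>u' k \<nu>\<bar> = \<bar>ln a - Digamma (real k + \<nu> + 1)\<bar> * \<bar>u k \<nu>\<bar>" by (simp add: u'_def abs_mult)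
    also have "\<dots> \<le> (\<bar>ln a\<bar> + Cd + 2) * 2^k * (Ca * Cr * (2 * a^2)^k / fact k)"
      by (intro mult_mono d ubound that) (use Cd in auto)
    also have "\<dots> = M k"
    proof -
      have "(4*a^2)^k = (2 * (2*a^2))^k" by simp
      also have "\<dots> = 2^k * (2*a^2)^k" by (rule power_mult_distrib)
      finally have e: "(4*a^2)^k = 2^k * (2*a^2)^k" .
      show ?thesis unfolding M_def K_def e by (simp add: mult_ac)
    qed
    finally show ?thesis .
  qed
  have sumM: "summable M"
  proof -
    have "summable (\<lambda>k. K * (inverse (fact k) * (4*a^2)^k))"
      by (rule summable_mult) (rule summable_exp)
    moreover have "M = (\<lambda>k. K * (inverse (fact k) * (4*a^2)^k))"
      by (rule ext) (simp only: M_def divide_inverse mult_ac)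
    ultimately show ?thesis by simp
  qed
  have unif: "uniformly_convergent_on S (\<lambda>n \<nu>. \<Sum>i<n. u' i \<nu>)"
    unfolding uniformly_convergent_on_def
    by (rule exI, rule Weierstrass_m_test[OF _ sumM]) (use u'bound in simp)
  have S0: "0 \<in> S" by (simp add: S_def)
  have int0: "0 \<in> interior S" by (simp add: S_def)
  have "summable (\<lambda>k. Ca * Cr * (inverse (fact k) * (2*a^2)^k))"
    by (rule summable_mult) (rule summable_exp)
  moreover have "(\<lambda>k. Ca * Cr * (2*a^2)^k / fact k) = (\<lambda>k. Ca * Cr * (inverse (fact k) * (2*a^2)^k))"
    by (rule ext) (simp only: divide_inverse mult_ac)
  ultimately have "summable (\<lambda>k. Ca * Cr * (2*a^2)^k / fact k)" by simp
  then have sumu: "summable (\<lambda>k. u k 0)"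
    by (rule summable_comparison_test[rotated]) (use ubound[OF S0] in auto)
  have sumu': "summable (\<lambda>k. u' k 0)"
    by (rule summable_comparison_test[OF _ sumM]) (use u'bound[OF S0] in auto)
  have D: "((\<lambda>\<nu>. \<Sum>k. u k \<nu>) has_real_derivative (\<Sum>k. u' k 0)) (at 0)"
    by (rule has_field_derivative_series'(2)[of S u u' 0 0])
       (use der unif S0 sumu int0 in \<open>auto simp: S_def\<close>)
  have u'0: "u' k 0 = (ln (z/2) - Digamma(real k + 1)) * ((z/2)^(2*k)/(fact k)^2)" for k
    by (simp add: u'_def u0 a_def)
  show "summable (\<lambda>k. (z/2)^(2*k)/(fact k)^2)" using sumu by (simp add: u0 a_def)
  show "besselI 0 z = (\<Sum>k. (z/2)^(2*k)/(fact k)^2)" using bI[of 0] by (simp add: u0 a_def)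
  show "summable (\<lambda>k. (ln (z/2) - Digamma(real k + 1)) * ((z/2)^(2*k)/(fact k)^2))"
    using sumu' by (simp add: u'0)
  show "((\<lambda>\<nu>. besselI \<nu> z) has_real_derivative
          (\<Sum>k. (ln (z/2) - Digamma(real k + 1)) * ((z/2)^(2*k)/(fact k)^2))) (at 0)"
    using D by (simp add: bI u'0)
qed


lemma besselK0_eq:
  fixes z :: real
  assumes z: "z > 0"
  shows "besselK0 z = - (\<Sum>k. (ln (z/2) - Digamma(real k + 1)) * ((z/2)^(2*k)/(fact k)^2))"
proof -
  define D where "D = (\<Sum>k. (ln (z/2) - Digamma(real k + 1)) * ((z/2)^(2*k)/(fact k)^2))"
  define g where "g \<nu> = besselI \<nu> z" for \<nu>
  have dg: "(g has_real_derivative D) (at 0)" using bessel_series(4)[OF z] unfolding g_def[abs_def] D_def .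
  have dg': "(g has_real_derivative D) (at (-0))" using dg by simp
  have dm: "((\<lambda>\<nu>. g (-\<nu>)) has_real_derivative D * (- 1)) (at 0)"
    by (rule DERIV_chain2[where f=g and g=uminus and x=0, OF dg']) (auto intro!: derivative_eq_intros)
  have dh: "((\<lambda>\<nu>. g (-\<nu>) - g \<nu>) has_real_derivative D * (- 1) - D) (at 0)"
    by (rule DERIV_diff[OF dm dg])
  then have lh: "((\<lambda>\<nu>. (g (-\<nu>) - g \<nu>) / \<nu>) \<longlongrightarrow> -2 * D) (at 0)"
    unfolding DERIV_def by simp
  have ds: "((\<lambda>\<nu>. sin (\<nu> * pi)) has_real_derivative cos (0 * pi) * (1 * pi)) (at 0)"
    by (auto intro!: derivative_eq_intros)
  then have ls: "((\<lambda>\<nu>. sin (\<nu> * pi) / \<nu>) \<longlongrightarrow> pi) (at 0)"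
    unfolding DERIV_def by simp
  have lq: "((\<lambda>\<nu>. (pi/2) * (((g (-\<nu>) - g \<nu>) / \<nu>) / (sin (\<nu> * pi) / \<nu>))) \<longlongrightarrow> (pi/2) * (-2 * D / pi)) (at 0)"
    by (intro tendsto_intros lh ls) simp
  have ev: "\<forall>\<^sub>F \<nu> in at 0. (pi/2) * (((g (-\<nu>) - g \<nu>) / \<nu>) / (sin (\<nu> * pi) / \<nu>))
      = (pi / 2) * (besselI (- \<nu>) z - besselI \<nu> z) / sin (\<nu> * pi)"
    unfolding eventually_at_filter by (auto simp: g_def)
  have "((\<lambda>\<nu>. (pi / 2) * (besselI (- \<nu>) z - besselI \<nu> z) / sin (\<nu> * pi)) \<longlongrightarrow> -D) (at 0)"
    using tendsto_cong[OF ev] lq by simp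
  then show ?thesis unfolding besselK0_def D_def[symmetric]
    by (intro tendsto_Lim) auto
qed


theorem mainTheorem4:
  fixes x :: real
  assumes "x > 0"
  shows "summable (\<lambda>n. (1 / (4 ^ n * (fact n)\<^sup>2)) * log_deriv_pow (real n) x)
    \<and> log_deriv_series (\<lambda>n. 1 / (4 ^ n * (fact n)\<^sup>2)) x
        + ln (2 * sqrt x) * besselI 0 (sqrt x) = besselK0 (sqrt x)"
proof -
  define z where "z = sqrt x"
  have z: "z > 0" using assms by (simp add: z_def)
  define e where "e k = (z/2)^(2*k)/(fact k)^2" for k
  define w where "w k = (ln (z/2) - Digamma(real k + 1)) * e k" for k
  define E where "E = (\<Sum>k. e k)"
  define W where "W = (\<Sum>k. w k)"
  have se: "e sums E" using bessel_series(1)[OF z] unfolding E_def e_def[abs_def] by (rule summable_sums)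
  have sw: "w sums W" using bessel_series(3)[OF z] unfolding W_def w_def[abs_def] e_def[abs_def] by (rule summable_sums)
  have bI: "besselI 0 z = E" using bessel_series(2)[OF z] unfolding E_def e_def[abs_def] .
  have bK: "besselK0 z = - W" using besselK0_eq[OF z] unfolding W_def w_def[abs_def] e_def[abs_def] .
  have ek: "e k = 1 / (4 ^ k * (fact k)\<^sup>2) * x ^ k" for k
  proof -
    have "(z/2)^(2*k) = ((z/2)^2)^k" by (simp add: power_mult)
    also have "(z/2)^2 = x / 4" using assms by (simp add: z_def power_divide)
    finally show ?thesis by (simp add: e_def power_divide)
  qed
  have lx: "ln x = 2 * ln z" using assms by (simp add: z_def ln_sqrt)
  have T: "1 / (4 ^ k * (fact k)\<^sup>2) * log_deriv_pow (real k) x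
      = - w k + (ln (z/2) - ln x) * e k" for k
    using assms by (simp add: log_deriv_pow_eq w_def ek diff_divide_distrib add_divide_distrib algebra_simps)
  have sT: "(\<lambda>k. 1 / (4 ^ k * (fact k)\<^sup>2) * log_deriv_pow (real k) x) sums (- W + (ln (z/2) - ln x) * E)"
    unfolding T by (intro sums_add sums_minus sums_mult sw se)
  have "ln (z/2) - ln x + ln (2 * z) = 0"
    using z lx by (simp add: ln_div ln_mult)
  then have fin: "- W + (ln (z/2) - ln x) * E + ln (2 * z) * E = - W"
    by (metis add.commute add.left_neutral add.assoc distrib_right mult_zero_left)
  show ?thesis
    using sT fin bI bK unfolding log_deriv_series_def z_def[symmetric]
    by (auto simp: sums_iff)
qed

end
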